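(* If the bornological \(V\)-module \(M\) is complete, then so is \(M'\).
   Context: Let \(V\) be a complete discrete valuation ring with uniformiser \(\pi\). A bornology on a set is a collection of subsets (called bounded) containing all finite subsets and closed under finite unions and under taking subsets. A bornological \(V\)-module is a \(V\)-module \(M\) with a bornology such that every bounded subset is contained in a bounded \(V\)-submodule. It is complete if every bounded subset is contained in a bounded \(V\)-submodule which is \(\pi\)-adically complete. A subset \(S\subseteq M\) is compactoid if there is a bounded \(V\)-submodule \(T\subseteq M\) with \(S\subseteq T\) such that for every \(n\in\mathbb N\) there is a finite set \(F_n\subseteq T\) with \(S\subseteq VF_n+\pi^nT\). \(M'\) denotes \(M\) with the bornology consisting of the compactoid subsets. *)

theory Defs
  imports Complex_Main
begin

definition dvr_uniformiser :: "'v::idom \<Rightarrow> bool" where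
  "dvr_uniformiser \<pi> \<longleftrightarrow> \<pi> \<noteq> 0 \<and> \<not> \<pi> dvd 1 \<and>
     (\<forall>x. x \<noteq> 0 \<longrightarrow> (\<exists>u n. u dvd 1 \<and> x = u * \<pi> ^ n))"

definition pi_adically_complete ::
  "('v::comm_ring_1 \<Rightarrow> 'm::ab_group_add \<Rightarrow> 'm) \<Rightarrow> 'v \<Rightarrow> 'm set \<Rightarrow> bool" where
  "pi_adically_complete s \<pi> T \<longleftrightarrow>
     (\<Inter>n. s (\<pi> ^ n) ` T) = {0} \<and>
     (\<forall>x :: nat \<Rightarrow> 'm. (\<forall>n. x n \<in> T) \<and> (\<forall>n. x (Suc n) - x n \<in> s (\<pi> ^ n) ` T) \<longrightarrow>
        (\<exists>y\<in>T. \<forall>n. y - x n \<in> s (\<pi> ^ n) ` T))"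

definition complete_dvr :: "'v::idom \<Rightarrow> bool" where
  "complete_dvr \<pi> \<longleftrightarrow> dvr_uniformiser \<pi> \<and> pi_adically_complete (*) \<pi> (UNIV :: 'v set)"

definition bornology :: "'a set set \<Rightarrow> bool" where
  "bornology B \<longleftrightarrow> (\<forall>F. finite F \<longrightarrow> F \<in> B) \<and> (\<forall>S\<in>B. \<forall>S'\<in>B. S \<union> S' \<in> B) \<and>
     (\<forall>S\<in>B. \<forall>S'. S' \<subseteq> S \<longrightarrow> S' \<in> B)"

definition bornological_module ::
  "('v::comm_ring_1 \<Rightarrow> 'm::ab_group_add \<Rightarrow> 'm) \<Rightarrow> 'm set set \<Rightarrow> bool" where
  "bornological_module s B \<longleftrightarrow> module s \<and> bornology B \<and>
     (\<forall>S\<in>B. \<exists>T\<in>B. module.subspace s T \<and> S \<subseteq> T)"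

definition complete_bornological_module ::
  "('v::comm_ring_1 \<Rightarrow> 'm::ab_group_add \<Rightarrow> 'm) \<Rightarrow> 'v \<Rightarrow> 'm set set \<Rightarrow> bool" where
  "complete_bornological_module s \<pi> B \<longleftrightarrow> bornological_module s B \<and>
     (\<forall>S\<in>B. \<exists>T\<in>B. module.subspace s T \<and> S \<subseteq> T \<and> pi_adically_complete s \<pi> T)"

definition compactoid ::
  "('v::comm_ring_1 \<Rightarrow> 'm::ab_group_add \<Rightarrow> 'm) \<Rightarrow> 'v \<Rightarrow> 'm set set \<Rightarrow> 'm set \<Rightarrow> bool" where
  "compactoid s \<pi> B S \<longleftrightarrow>
     (\<exists>T\<in>B. module.subspace s T \<and> S \<subseteq> T \<and>
        (\<forall>n::nat. \<exists>F. finite F \<and> F \<subseteq> T \<and>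
           S \<subseteq> {a + b | a b. a \<in> module.span s F \<and> b \<in> s (\<pi> ^ n) ` T}))"

text \<open>The bornology of M': the compactoid subsets.\<close>
definition compactoid_bornology ::
  "('v::comm_ring_1 \<Rightarrow> 'm::ab_group_add \<Rightarrow> 'm) \<Rightarrow> 'v \<Rightarrow> 'm set set \<Rightarrow> 'm set set" where
  "compactoid_bornology s \<pi> B = {S. compactoid s \<pi> B S}"

end

theory Submission
  imports Defs
begin

lemma sumset_mono:
  fixes A :: "'a::plus set"
  shows "A \<subseteq> A' \<Longrightarrow> B \<subseteq> B' \<Longrightarrow> {a + b |a b. a \<in> A \<and> b \<in> B} \<subseteq> {a + b |a b. a \<in> A' \<and> b \<in> B'}"
  by blast

context module
begin

lemma img_subspace: "subspace W \<Longrightarrow> subspace (scale c ` W)"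
proof (rule subspaceI)
  assume W: "subspace W"
  show "0 \<in> scale c ` W" using subspace_0[OF W] by (auto intro!: image_eqI[where x=0])
  fix x y assume "x \<in> scale c ` W" "y \<in> scale c ` W"
  then obtain u v where "u \<in> W" "v \<in> W" "x = scale c u" "y = scale c v" by blast
  then show "x + y \<in> scale c ` W" using subspace_add[OF W]
    by (auto simp: scale_right_distrib[symmetric])
next
  assume W: "subspace W"
  fix d x assume "x \<in> scale c ` W"
  then obtain u where "u \<in> W" "x = scale c u" by blast
  then have "scale d x = scale c (scale d u)" by (simp add: mult.commute)
  then show "scale d x \<in> scale c ` W" using subspace_scale[OF W] \<open>u \<in> W\<close> by blast
qed

lemma img_pow_mono:
  assumes "subspace W" "m \<le> n"
  shows "scale (p ^ n) ` W \<subseteq> scale (p ^ m) ` W"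
proof
  fix x assume "x \<in> scale (p ^ n) ` W"
  then obtain u where u: "u \<in> W" "x = scale (p ^ n) u" by auto
  have "p ^ n = p ^ m * p ^ (n - m)" using assms(2) by (simp add: power_add[symmetric])
  then have "x = scale (p ^ m) (scale (p ^ (n - m)) u)" using u by simp
  moreover have "scale (p ^ (n - m)) u \<in> W" using assms(1) u subspace_scale by blast
  ultimately show "x \<in> scale (p ^ m) ` W" by blast
qed

lemma img_mono_set: "A \<subseteq> W \<Longrightarrow> scale c ` A \<subseteq> scale c ` W" by auto

lemma complete_sub:
  assumes W: "subspace W" and cW: "pi_adically_complete scale p W"
    and T: "subspace T" and TW: "T \<subseteq> W"
    and closed: "\<And>z. z \<in> W \<Longrightarrow> (\<forall>n. \<exists>w\<in>T. z - w \<in> scale (p ^ n) ` W) \<Longrightarrow> z \<in> T"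
  shows "pi_adically_complete scale p T"
proof -
  have imgTW: "\<And>n. scale (p ^ n) ` T \<subseteq> scale (p ^ n) ` W" using TW by (rule img_mono_set)
  have sepW: "(\<Inter>n. scale (p ^ n) ` W) = {0}" using cW unfolding pi_adically_complete_def by blast
  have limW: "\<And>x. (\<forall>n. x n \<in> W) \<Longrightarrow> (\<forall>n. x (Suc n) - x n \<in> scale (p ^ n) ` W) \<Longrightarrow>
        (\<exists>y\<in>W. \<forall>n. y - x n \<in> scale (p ^ n) ` W)"
    using cW unfolding pi_adically_complete_def by blast
  have sep: "(\<Inter>n. scale (p ^ n) ` T) = {0}"
  proof
    show "(\<Inter>n. scale (p ^ n) ` T) \<subseteq> {0}"
    proof
      fix z assume "z \<in> (\<Inter>n. scale (p ^ n) ` T)"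
      then have "z \<in> scale (p ^ n) ` W" for n using imgTW[of n] by blast
      then show "z \<in> {0}" using sepW by blast
    qed
    show "{0} \<subseteq> (\<Inter>n. scale (p ^ n) ` T)" using subspace_0[OF T]
      by (auto intro!: image_eqI[where x=0])
  qed
  have sub: "\<And>n. subspace (scale (p ^ n) ` W)" using img_subspace[OF W] by blast
  have zero_of: "\<And>d. (\<And>m. d \<in> scale (p ^ m) ` W) \<Longrightarrow> d = 0" using sepW by blast
  have lim: "\<exists>y\<in>T. \<forall>n. y - x n \<in> scale (p ^ n) ` T"
    if xT: "\<forall>n. x n \<in> T" and xd: "\<forall>n. x (Suc n) - x n \<in> scale (p ^ n) ` T" for x
  proof -
    from xd have "\<forall>n. \<exists>u. u \<in> T \<and> x (Suc n) - x n = scale (p ^ n) u" by blast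
    then obtain t where t: "\<And>n. t n \<in> T" "\<And>n. x (Suc n) - x n = scale (p ^ n) (t n)" by metis
    have "\<exists>y\<in>W. \<forall>n. y - x n \<in> scale (p ^ n) ` W"
    proof (rule limW)
      show "\<forall>n. x n \<in> W" using xT TW by blast
      show "\<forall>n. x (Suc n) - x n \<in> scale (p ^ n) ` W" using xd imgTW by blast
    qed
    then obtain y where yW: "y \<in> W" and yx: "\<And>n. y - x n \<in> scale (p ^ n) ` W" by blast
    have yT: "y \<in> T" using closed[OF yW] yx xT by blast
    have key: "\<exists>z\<in>T. y - x k = scale (p ^ k) z" for k
    proof -
      define w where "w m = (\<Sum>j<m. scale (p ^ j) (t (k + j)))" for m
      have wT: "w m \<in> T" for m unfolding w_def
        by (rule subspace_sum[OF T]) (simp add: subspace_scale[OF T t(1)])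
      have "\<exists>z\<in>W. \<forall>m. z - w m \<in> scale (p ^ m) ` W"
      proof (rule limW)
        show "\<forall>m. w m \<in> W" using wT TW by blast
        show "\<forall>m. w (Suc m) - w m \<in> scale (p ^ m) ` W"
        proof
          fix m
          have "w (Suc m) - w m = scale (p ^ m) (t (k + m))" by (simp add: w_def)
          moreover have "t (k + m) \<in> W" using t(1) TW by blast
          ultimately show "w (Suc m) - w m \<in> scale (p ^ m) ` W" by blast
        qed
      qed
      then obtain z where zW: "z \<in> W" and zw: "\<And>m. z - w m \<in> scale (p ^ m) ` W" by blast
      have zT: "z \<in> T" using closed[OF zW] zw wT by blast
      have tel: "x (k + m) - x k = scale (p ^ k) (w m)" for m
      proof (induction m)
        case 0 then show ?case by (simp add: w_def)
      next
        case (Suc m)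
        have "x (k + Suc m) - x k = (x (Suc (k + m)) - x (k + m)) + (x (k + m) - x k)" by simp
        also have "\<dots> = scale (p ^ (k + m)) (t (k + m)) + scale (p ^ k) (w m)" using t(2) Suc by simp
        also have "\<dots> = scale (p ^ k) (w (Suc m))"
          by (simp add: w_def scale_right_distrib power_add add.commute)
        finally show ?case .
      qed
      have "(y - x k) - scale (p ^ k) z = 0"
      proof (rule zero_of)
        fix m
        have e: "(y - x k) - scale (p ^ k) z = (y - x (k + m)) + scale (p ^ k) (- (z - w m))"
          using tel[of m] by (simp add: scale_right_diff_distrib algebra_simps)
        have a: "y - x (k + m) \<in> scale (p ^ m) ` W"
          using yx[of "k+m"] img_pow_mono[OF W, of m "k+m" p] by auto
        from zw[of m] obtain u where u: "u \<in> W" "z - w m = scale (p ^ m) u" by blast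
        have "scale (p ^ k) (- (z - w m)) = scale (p ^ m) (scale (p ^ k) (- u))"
          using u by (simp add: mult.commute)
        moreover have "scale (p ^ k) (- u) \<in> W" using subspace_scale[OF W subspace_neg[OF W u(1)]] by simp
        ultimately have b: "scale (p ^ k) (- (z - w m)) \<in> scale (p ^ m) ` W" by blast
        show "(y - x k) - scale (p ^ k) z \<in> scale (p ^ m) ` W"
          unfolding e using subspace_add[OF sub a b] .
      qed
      then show ?thesis using zT by auto
    qed
    show ?thesis using yT key by blast
  qed
  show ?thesis unfolding pi_adically_complete_def using sep lim by blast
qed

lemma key_compactoid:
  assumes cB: "complete_bornological_module scale p B"
    and S: "compactoid scale p B S"
  shows "\<exists>T'. compactoid scale p B T' \<and> subspace T' \<and> S \<subseteq> T' \<and> pi_adically_complete scale p T'"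
proof -
  from S obtain T where TB: "T \<in> B" and T: "subspace T" and ST: "S \<subseteq> T"
    and F: "\<forall>n::nat. \<exists>F. finite F \<and> F \<subseteq> T \<and>
           S \<subseteq> {a + b | a b. a \<in> span F \<and> b \<in> scale (p ^ n) ` T}"
    unfolding compactoid_def by blast
  from choice[OF F] obtain Fn where Fn0: "\<forall>n. finite (Fn n) \<and> Fn n \<subseteq> T \<and>
    S \<subseteq> {a + b | a b. a \<in> span (Fn n) \<and> b \<in> scale (p ^ n) ` T}" by blast
  have Fn: "\<And>n. finite (Fn n)" "\<And>n. Fn n \<subseteq> T"
    "\<And>n. S \<subseteq> {a + b | a b. a \<in> span (Fn n) \<and> b \<in> scale (p ^ n) ` T}"
    using Fn0 by blast+
  from cB TB obtain W where WB: "W \<in> B" and W: "subspace W" and TW: "T \<subseteq> W"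
    and cW: "pi_adically_complete scale p W"
    unfolding complete_bornological_module_def by blast
  have sub: "\<And>n. subspace (scale (p ^ n) ` W)" using img_subspace[OF W] by blast
  define T' where "T' = {x \<in> W. \<forall>n. x \<in> {a + b | a b. a \<in> span (Fn n) \<and> b \<in> scale (p ^ n) ` W}}"
  have T'W: "T' \<subseteq> W" unfolding T'_def by blast
  have subT': "subspace T'"
  proof (rule subspaceI)
    show "0 \<in> T'" unfolding T'_def using subspace_0[OF W] subspace_0[OF sub] span_zero
      by (auto intro!: exI[where x=0])
  next
    fix x y assume x: "x \<in> T'" and y: "y \<in> T'"
    show "x + y \<in> T'" unfolding T'_def
    proof (rule CollectI, intro conjI allI)
      show "x + y \<in> W" using x y T'W subspace_add[OF W] by blast
      fix n
      from x obtain a b where ab: "x = a + b" "a \<in> span (Fn n)" "b \<in> scale (p ^ n) ` W"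
        unfolding T'_def by blast
      from y obtain a' b' where ab': "y = a' + b'" "a' \<in> span (Fn n)" "b' \<in> scale (p ^ n) ` W"
        unfolding T'_def by blast
      have "x + y = (a + a') + (b + b')" using ab ab' by (simp add: algebra_simps)
      moreover have "a + a' \<in> span (Fn n)" using ab ab' span_add by blast
      moreover have "b + b' \<in> scale (p ^ n) ` W" using ab ab' subspace_add[OF sub] by blast
      ultimately show "x + y \<in> {a + b | a b. a \<in> span (Fn n) \<and> b \<in> scale (p ^ n) ` W}" by blast
    qed
  next
    fix c x assume x: "x \<in> T'"
    show "scale c x \<in> T'" unfolding T'_def
    proof (rule CollectI, intro conjI allI)
      show "scale c x \<in> W" using x T'W subspace_scale[OF W] by blast
      fix n
      from x obtain a b where ab: "x = a + b" "a \<in> span (Fn n)" "b \<in> scale (p ^ n) ` W"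
        unfolding T'_def by blast
      have "scale c x = scale c a + scale c b" using ab by (simp add: scale_right_distrib)
      moreover have "scale c a \<in> span (Fn n)" using ab span_scale by blast
      moreover have "scale c b \<in> scale (p ^ n) ` W" using ab subspace_scale[OF sub] by blast
      ultimately show "scale c x \<in> {a + b | a b. a \<in> span (Fn n) \<and> b \<in> scale (p ^ n) ` W}" by blast
    qed
  qed
  have ST': "S \<subseteq> T'"
  proof
    fix x assume x: "x \<in> S"
    show "x \<in> T'" unfolding T'_def
    proof (rule CollectI, intro conjI allI)
      show "x \<in> W" using x ST TW by blast
      fix n
      from Fn(3)[of n] x obtain a b where "x = a + b" "a \<in> span (Fn n)" "b \<in> scale (p ^ n) ` T"
        by blast
      then show "x \<in> {a + b | a b. a \<in> span (Fn n) \<and> b \<in> scale (p ^ n) ` W}"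
        using img_mono_set[OF TW] by blast
    qed
  qed
  have compT': "compactoid scale p B T'"
    unfolding compactoid_def
    apply (rule bexI[OF _ WB])
    apply (intro conjI W T'W allI)
    subgoal for n
      apply (rule exI[where x="Fn n"])
      apply (intro conjI Fn(1))
      using Fn(2) TW apply blast
      unfolding T'_def by (rule subsetI, drule CollectD, erule conjE, erule allE[where x=n])
    done
  have closed: "z \<in> T'" if zW: "z \<in> W" and h: "\<forall>n. \<exists>w\<in>T'. z - w \<in> scale (p ^ n) ` W" for z
    unfolding T'_def
  proof (rule CollectI, intro conjI allI zW)
    fix n
    from h obtain w where w: "w \<in> T'" "z - w \<in> scale (p ^ n) ` W" by blast
    from w(1) obtain a b where ab: "w = a + b" "a \<in> span (Fn n)" "b \<in> scale (p ^ n) ` W"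
      unfolding T'_def by blast
    have "z = a + (b + (z - w))" using ab by simp
    moreover have "b + (z - w) \<in> scale (p ^ n) ` W" using ab w subspace_add[OF sub] by blast
    ultimately show "z \<in> {a + b | a b. a \<in> span (Fn n) \<and> b \<in> scale (p ^ n) ` W}" using ab by blast
  qed
  have "pi_adically_complete scale p T'"
    by (rule complete_sub[OF W cW subT' T'W closed])
  then show ?thesis using compT' subT' ST' by blast
qed

end

theorem lemma4p1:
  fixes s :: "'v::idom \<Rightarrow> 'm::ab_group_add \<Rightarrow> 'm" and \<pi> :: 'v and B :: "'m set set"
  assumes "complete_dvr \<pi>"
    and "complete_bornological_module s \<pi> B"
  shows "complete_bornological_module s \<pi> (compactoid_bornology s \<pi> B)"
proof -
  have bm: "bornological_module s B" using assms(2) unfolding complete_bornological_module_def by blast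
  then have ms: "module s" and bB: "bornology B" and bsub: "\<forall>S\<in>B. \<exists>T\<in>B. module.subspace s T \<and> S \<subseteq> T"
    unfolding bornological_module_def by blast+
  interpret module s by (rule ms)
  have sub: "\<And>T n. subspace T \<Longrightarrow> subspace (s (\<pi> ^ n) ` T)" using img_subspace by blast
  have key: "\<forall>S\<in>compactoid_bornology s \<pi> B. \<exists>T\<in>compactoid_bornology s \<pi> B.
      subspace T \<and> S \<subseteq> T \<and> pi_adically_complete s \<pi> T"
  proof
    fix S assume "S \<in> compactoid_bornology s \<pi> B"
    then have "compactoid s \<pi> B S" by (simp add: compactoid_bornology_def)
    from key_compactoid[OF assms(2) this] obtain T' where
      T': "compactoid s \<pi> B T'" "subspace T'" "S \<subseteq> T'" "pi_adically_complete s \<pi> T'"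
      by blast
    have "T' \<in> compactoid_bornology s \<pi> B" using T'(1) by (simp add: compactoid_bornology_def)
    then show "\<exists>T\<in>compactoid_bornology s \<pi> B.
      subspace T \<and> S \<subseteq> T \<and> pi_adically_complete s \<pi> T" using T'(2-4) by blast
  qed
  have bfin: "\<And>F. finite F \<Longrightarrow> F \<in> B" using conjunct1[OF bB[unfolded bornology_def]] by blast
  have bun: "\<And>S S'. S \<in> B \<Longrightarrow> S' \<in> B \<Longrightarrow> S \<union> S' \<in> B"
    using conjunct1[OF conjunct2[OF bB[unfolded bornology_def]]] by blast
  have born: "bornology (compactoid_bornology s \<pi> B)"
    unfolding bornology_def compactoid_bornology_def
  proof (intro conjI allI impI ballI)
    fix F :: "'m set" assume fin: "finite F"
    have "F \<in> B" using bfin fin by blast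
    then obtain T where TB: "T \<in> B" "subspace T" "F \<subseteq> T" using bsub by blast
    show "F \<in> {S. compactoid s \<pi> B S}" unfolding compactoid_def
    proof (intro CollectI bexI[OF _ TB(1)] conjI TB(2,3) allI)
      fix n :: nat
      show "\<exists>G. finite G \<and> G \<subseteq> T \<and> F \<subseteq> {a + b |a b. a \<in> span G \<and> b \<in> s (\<pi> ^ n) ` T}"
      proof (intro exI[where x=F] conjI fin TB(3) subsetI)
        fix x assume "x \<in> F"
        then have "x = x + 0" "x \<in> span F" "0 \<in> s (\<pi> ^ n) ` T"
          using span_base subspace_0[OF sub[OF TB(2)]] by auto
        then show "x \<in> {a + b |a b. a \<in> span F \<and> b \<in> s (\<pi> ^ n) ` T}" by blast
      qed
    qed
  next
    fix S S' assume S: "S \<in> {S. compactoid s \<pi> B S}" and S': "S' \<in> {S. compactoid s \<pi> B S}"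
    from S obtain T1 where T1: "T1 \<in> B" "subspace T1" "S \<subseteq> T1"
      and F1: "\<forall>n::nat. \<exists>F. finite F \<and> F \<subseteq> T1 \<and>
           S \<subseteq> {a + b | a b. a \<in> span F \<and> b \<in> s (\<pi> ^ n) ` T1}"
      unfolding compactoid_def by blast
    from S' obtain T2 where T2: "T2 \<in> B" "subspace T2" "S' \<subseteq> T2"
      and F2: "\<forall>n::nat. \<exists>F. finite F \<and> F \<subseteq> T2 \<and>
           S' \<subseteq> {a + b | a b. a \<in> span F \<and> b \<in> s (\<pi> ^ n) ` T2}"
      unfolding compactoid_def by blast
    have "T1 \<union> T2 \<in> B" using bun T1 T2 by blast
    then obtain T where TB: "T \<in> B" "subspace T" "T1 \<union> T2 \<subseteq> T" using bsub by blast
    show "S \<union> S' \<in> {S. compactoid s \<pi> B S}" unfolding compactoid_def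
    proof (intro CollectI bexI[OF _ TB(1)] conjI TB(2) allI)
      show "S \<union> S' \<subseteq> T" using T1 T2 TB by blast
      fix n :: nat
      obtain G1 where G10: "finite G1 \<and> G1 \<subseteq> T1 \<and> S \<subseteq> {a + b | a b. a \<in> span G1 \<and> b \<in> s (\<pi> ^ n) ` T1}"
        using spec[OF F1, of n] by (rule exE)
      note G1 = G10[THEN conjunct1] G10[THEN conjunct2, THEN conjunct1] G10[THEN conjunct2, THEN conjunct2]
      obtain G2 where G20: "finite G2 \<and> G2 \<subseteq> T2 \<and> S' \<subseteq> {a + b | a b. a \<in> span G2 \<and> b \<in> s (\<pi> ^ n) ` T2}"
        using spec[OF F2, of n] by (rule exE)
      note G2 = G20[THEN conjunct1] G20[THEN conjunct2, THEN conjunct1] G20[THEN conjunct2, THEN conjunct2]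
      show "\<exists>G. finite G \<and> G \<subseteq> T \<and> S \<union> S' \<subseteq> {a + b |a b. a \<in> span G \<and> b \<in> s (\<pi> ^ n) ` T}"
      proof (intro exI[where x="G1 \<union> G2"] conjI)
        show "finite (G1 \<union> G2)" using G1 G2 by blast
        show "G1 \<union> G2 \<subseteq> T" using G1 G2 TB by blast
        have s1: "span G1 \<subseteq> span (G1 \<union> G2)" "span G2 \<subseteq> span (G1 \<union> G2)"
          by (rule span_mono, blast)+
        have i1: "s (\<pi> ^ n) ` T1 \<subseteq> s (\<pi> ^ n) ` T" "s (\<pi> ^ n) ` T2 \<subseteq> s (\<pi> ^ n) ` T"
          using TB(3) by (intro image_mono, blast)+
        show "S \<union> S' \<subseteq> {a + b |a b. a \<in> span (G1 \<union> G2) \<and> b \<in> s (\<pi> ^ n) ` T}"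
        proof (rule Un_least)
          show "S \<subseteq> {a + b |a b. a \<in> span (G1 \<union> G2) \<and> b \<in> s (\<pi> ^ n) ` T}"
            by (rule subset_trans[OF G1(3) sumset_mono[OF s1(1) i1(1)]])
          show "S' \<subseteq> {a + b |a b. a \<in> span (G1 \<union> G2) \<and> b \<in> s (\<pi> ^ n) ` T}"
            by (rule subset_trans[OF G2(3) sumset_mono[OF s1(2) i1(2)]])
        qed
      qed
    qed
  next
    fix S S' assume S: "S \<in> {S. compactoid s \<pi> B S}" and S': "S' \<subseteq> S"
    from S obtain T where T: "T \<in> B" "subspace T" "S \<subseteq> T"
      and F: "\<forall>n::nat. \<exists>F. finite F \<and> F \<subseteq> T \<and>
           S \<subseteq> {a + b | a b. a \<in> span F \<and> b \<in> s (\<pi> ^ n) ` T}"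
      unfolding compactoid_def by blast
    show "S' \<in> {S. compactoid s \<pi> B S}" unfolding compactoid_def
    proof (rule CollectI, rule bexI[OF _ T(1)], intro conjI T(2) allI)
      show "S' \<subseteq> T" by (rule subset_trans[OF S' T(3)])
      fix n :: nat
      obtain G where G0: "finite G \<and> G \<subseteq> T \<and> S \<subseteq> {a + b | a b. a \<in> span G \<and> b \<in> s (\<pi> ^ n) ` T}"
        using spec[OF F, of n] by (rule exE)
      note G = G0[THEN conjunct1] G0[THEN conjunct2, THEN conjunct1] G0[THEN conjunct2, THEN conjunct2]
      show "\<exists>G. finite G \<and> G \<subseteq> T \<and> S' \<subseteq> {a + b |a b. a \<in> span G \<and> b \<in> s (\<pi> ^ n) ` T}"
      proof (intro exI[where x=G] conjI G(1,2))
        show "S' \<subseteq> {a + b |a b. a \<in> span G \<and> b \<in> s (\<pi> ^ n) ` T}"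
          by (rule subset_trans[OF S' G(3)])
      qed
    qed
  qed
  show ?thesis
    unfolding complete_bornological_module_def bornological_module_def
  proof (intro conjI ms born)
    show "\<forall>S\<in>compactoid_bornology s \<pi> B. \<exists>T\<in>compactoid_bornology s \<pi> B. subspace T \<and> S \<subseteq> T"
    proof
      fix S assume "S \<in> compactoid_bornology s \<pi> B"
      with key obtain T where "T \<in> compactoid_bornology s \<pi> B" "subspace T" "S \<subseteq> T" by blast
      then show "\<exists>T\<in>compactoid_bornology s \<pi> B. subspace T \<and> S \<subseteq> T" by blast
    qed
  qed (rule key)
qed

end
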